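(* Let $P\subseteq\mathbb{R}^d$ be a simple $d$-polytope and $2\le k\le d$. Then $P$ is inscribed if and only if all its $k$-dimensional faces are inscribed.
   Context: A $d$-polytope is simple if every vertex lies in exactly $d$ facets. A polytope is inscribed if all its vertices lie on a common sphere. *)

theory Defs
  imports "HOL-Analysis.Analysis"
begin

definition simple_polytope :: "'a::euclidean_space set \<Rightarrow> bool" where
  "simple_polytope P \<longleftrightarrow> polytope P \<and>
     (\<forall>v. v extreme_point_of P \<longrightarrow>
        int (card {F. F facet_of P \<and> v \<in> F}) = aff_dim P)"

definition inscribed :: "'a::euclidean_space set \<Rightarrow> bool" where
  "inscribed P \<longleftrightarrow> (\<exists>c r. \<forall>v. v extreme_point_of P \<longrightarrow> dist c v = r)"

end

theory Submission imports Defs begin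

locale sp =
  fixes P :: "'a::euclidean_space set" and H :: "'a set set"
    and a :: "'a set \<Rightarrow> 'a" and b :: "'a set \<Rightarrow> real"
  assumes finH: "finite H" and PH: "P = \<Inter>H"
    and ab: "\<And>h. h \<in> H \<Longrightarrow> a h \<noteq> 0 \<and> h = {x. a h \<bullet> x \<le> b h}"
    and polyP: "polytope P"
    and cardI: "\<And>v. v extreme_point_of P \<Longrightarrow> card {h\<in>H. a h \<bullet> v = b h} = DIM('a)"
begin

lemma inP: "x \<in> P \<longleftrightarrow> (\<forall>h\<in>H. a h \<bullet> x \<le> b h)"
proof -
  have "x \<in> P \<longleftrightarrow> (\<forall>h\<in>H. x \<in> h)" using PH by auto
  also have "\<dots> \<longleftrightarrow> (\<forall>h\<in>H. a h \<bullet> x \<le> b h)"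
    using ab by (metis (no_types, lifting) mem_Collect_eq)
  finally show ?thesis .
qed

lemma inPD: "x \<in> P \<Longrightarrow> h \<in> H \<Longrightarrow> a h \<bullet> x \<le> b h"
  using inP by blast

lemma push:
  assumes "v \<in> P" "\<And>h. h\<in>H \<Longrightarrow> a h \<bullet> v = b h \<Longrightarrow> a h \<bullet> u \<le> 0"
  shows "\<exists>c>0. \<forall>t. 0 < t \<and> t < c \<longrightarrow> v + t *\<^sub>R u \<in> P"
proof -
  have "\<forall>h\<in>H. eventually (\<lambda>t. a h \<bullet> (v + t *\<^sub>R u) \<le> b h) (at_right 0)"
  proof
    fix h assume h: "h \<in> H"
    have le: "a h \<bullet> v \<le> b h" using assms(1) h inP by auto
    show "eventually (\<lambda>t. a h \<bullet> (v + t *\<^sub>R u) \<le> b h) (at_right 0)"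
    proof (cases "a h \<bullet> v = b h")
      case True
      have "eventually (\<lambda>t::real. 0 < t) (at_right 0)" by (simp add: eventually_at_right_less)
      then show ?thesis
      proof (rule eventually_mono)
        fix t :: real assume "0 < t"
        then have "t * (a h \<bullet> u) \<le> 0" using assms(2)[OF h True] by (simp add: mult_nonneg_nonpos)
        then show "a h \<bullet> (v + t *\<^sub>R u) \<le> b h" using True by (simp add: inner_add_right)
      qed
    next
      case False
      then have lt: "a h \<bullet> v < b h" using le by simp
      have "((\<lambda>t. a h \<bullet> (v + t *\<^sub>R u)) \<longlongrightarrow> a h \<bullet> (v + 0 *\<^sub>R u)) (at_right 0)"
        by (intro tendsto_intros)
      then have "((\<lambda>t. a h \<bullet> (v + t *\<^sub>R u)) \<longlongrightarrow> a h \<bullet> v) (at_right 0)" by simp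
      from order_tendstoD(2)[OF this lt] show ?thesis by (rule eventually_mono) simp
    qed
  qed
  then have "eventually (\<lambda>t. \<forall>h\<in>H. a h \<bullet> (v + t *\<^sub>R u) \<le> b h) (at_right 0)"
    using finH by (rule eventually_ball_finite[rotated])
  then obtain c :: real where c: "c > 0" "\<And>y. y > 0 \<Longrightarrow> y < c \<Longrightarrow> \<forall>h\<in>H. a h \<bullet> (v + y *\<^sub>R u) \<le> b h"
    unfolding eventually_at_right_field by auto
  show ?thesis using c inP by (intro exI[of _ c]) auto
qed

definition Iv where "Iv v = {h\<in>H. a h \<bullet> v = b h}"
definition fc where "fc J = {x\<in>P. \<forall>g\<in>J. a g \<bullet> x = b g}"
definition e where "e v h = (SOME e. a h \<bullet> e = -1 \<and> (\<forall>g\<in>Iv v - {h}. a g \<bullet> e = 0))"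

lemma finIv: "finite (Iv v)" using finH by (simp add: Iv_def)
lemma IvH: "Iv v \<subseteq> H" by (auto simp: Iv_def)
lemma cardIv: "v extreme_point_of P \<Longrightarrow> card (Iv v) = DIM('a)"
  using cardI by (simp add: Iv_def)

lemma nondeg:
  assumes v: "v extreme_point_of P" and u: "\<And>h. h \<in> Iv v \<Longrightarrow> a h \<bullet> u = 0"
  shows "u = 0"
proof (rule ccontr)
  assume "u \<noteq> 0"
  have vP: "v \<in> P" using v extreme_point_of_def by blast
  obtain c1 where c1: "c1 > 0" "\<forall>t. 0 < t \<and> t < c1 \<longrightarrow> v + t *\<^sub>R u \<in> P"
    using push[OF vP, of u] u by (auto simp: Iv_def)
  obtain c2 where c2: "c2 > 0" "\<forall>t. 0 < t \<and> t < c2 \<longrightarrow> v + t *\<^sub>R (-u) \<in> P"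
    using push[OF vP, of "-u"] u by (auto simp: Iv_def)
  define s where "s = min c1 c2 / 2"
  have s: "0 < s" "s < c1" "s < c2" using c1 c2 by (auto simp: s_def)
  have p1: "v + s *\<^sub>R u \<in> P" using c1 s by auto
  have p2: "v - s *\<^sub>R u \<in> P" using c2 s by auto
  have d: "(v + s *\<^sub>R u) - (v - s *\<^sub>R u) = (2 * s) *\<^sub>R u" by (simp add: algebra_simps flip: scaleR_add_left)
  have "(2 * s) *\<^sub>R u \<noteq> 0" using \<open>u \<noteq> 0\<close> s(1) by simp
  then have ne: "v - s *\<^sub>R u \<noteq> v + s *\<^sub>R u" using d by force
  have "midpoint (v - s *\<^sub>R u) (v + s *\<^sub>R u) = v"
    by (simp add: midpoint_def algebra_simps scaleR_2[symmetric])
  then have "v \<in> open_segment (v - s *\<^sub>R u) (v + s *\<^sub>R u)"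
    using ne midpoint_in_open_segment by metis
  then show False using v p1 p2 unfolding extreme_point_of_def by blast
qed

lemma dual_ex:
  assumes v: "v extreme_point_of P" and h: "h \<in> Iv v"
  shows "\<exists>e. a h \<bullet> e = -1 \<and> (\<forall>g\<in>Iv v - {h}. a g \<bullet> e = 0)"
proof -
  let ?S = "a ` (Iv v - {h})"
  have fS: "finite ?S" using finIv by simp
  have "card ?S \<le> card (Iv v - {h})" using finIv card_image_le by blast
  also have "\<dots> < DIM('a)" using cardIv[OF v] h finIv
    by (metis DIM_positive card_Diff1_less)
  finally have dS: "dim ?S < DIM('a)" using dim_le_card[OF span_superset fS] by linarith
  obtain x :: 'a where x: "x \<noteq> 0" "\<And>y. y \<in> span ?S \<Longrightarrow> orthogonal x y"
    using orthogonal_to_subspace_exists[OF dS] by blast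
  have xg: "a g \<bullet> x = 0" if "g \<in> Iv v - {h}" for g
    using x(2)[of "a g"] that span_base[of "a g" ?S] by (auto simp: orthogonal_def inner_commute)
  have "a h \<bullet> x \<noteq> 0"
  proof
    assume "a h \<bullet> x = 0"
    then have "\<And>g. g \<in> Iv v \<Longrightarrow> a g \<bullet> x = 0" using xg by blast
    then show False using nondeg[OF v] x(1) by blast
  qed
  then show ?thesis using xg
    by (intro exI[of _ "(-1 / (a h \<bullet> x)) *\<^sub>R x"]) auto
qed

lemma dual:
  assumes v: "v extreme_point_of P" and h: "h \<in> Iv v"
  shows "a h \<bullet> e v h = -1" "\<And>g. g \<in> Iv v \<Longrightarrow> g \<noteq> h \<Longrightarrow> a g \<bullet> e v h = 0"
  using someI_ex[OF dual_ex[OF v h]] unfolding e_def by auto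

lemma rep:
  assumes v: "v extreme_point_of P"
  shows "x - v = (\<Sum>h\<in>Iv v. (b h - a h \<bullet> x) *\<^sub>R e v h)"
proof -
  let ?s = "(\<Sum>h\<in>Iv v. (b h - a h \<bullet> x) *\<^sub>R e v h)"
  have "a g \<bullet> (x - v - ?s) = 0" if g: "g \<in> Iv v" for g
  proof -
    have "a g \<bullet> ?s = (\<Sum>h\<in>Iv v. (b h - a h \<bullet> x) * (a g \<bullet> e v h))"
      by (simp add: inner_sum_right)
    also have "\<dots> = (\<Sum>h\<in>Iv v. if h = g then (b g - a g \<bullet> x) * (-1) else 0)"
      by (rule sum.cong) (auto simp: dual[OF v] g)
    also have "\<dots> = a g \<bullet> x - b g" using g finIv by simp
    finally show ?thesis using g by (simp add: inner_diff_right Iv_def)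
  qed
  then have "x - v - ?s = 0" by (rule nondeg[OF v])
  then show ?thesis by simp
qed

lemma face_fc:
  assumes J: "J \<subseteq> H"
  shows "fc J face_of P"
proof -
  let ?A = "\<Sum>g\<in>J. a g" and ?B = "\<Sum>g\<in>J. b g"
  have fJ: "finite J" using J finH finite_subset by blast
  have le: "?A \<bullet> x \<le> ?B" if x: "x \<in> P" for x
  proof -
    have "?A \<bullet> x = (\<Sum>g\<in>J. a g \<bullet> x)" by (simp add: inner_sum_left)
    also have "\<dots> \<le> ?B"
    proof (rule sum_mono)
      fix g assume "g \<in> J"
      then have "g \<in> H" using J by blast
      then show "a g \<bullet> x \<le> b g" using x unfolding inP by blast
    qed
    finally show ?thesis .
  qed
  have eq: "fc J = P \<inter> {x. ?A \<bullet> x = ?B}"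
  proof (intro set_eqI iffI)
    fix x assume x: "x \<in> fc J"
    have "?A \<bullet> x = (\<Sum>g\<in>J. a g \<bullet> x)" by (simp add: inner_sum_left)
    also have "\<dots> = ?B" by (rule sum.cong) (use x in \<open>simp_all add: fc_def\<close>)
    finally show "x \<in> P \<inter> {x. ?A \<bullet> x = ?B}" using x by (simp add: fc_def)
  next
    fix x assume x: "x \<in> P \<inter> {x. ?A \<bullet> x = ?B}"
    have "(\<Sum>g\<in>J. b g - a g \<bullet> x) = ?B - (\<Sum>g\<in>J. a g \<bullet> x)"
      by (simp add: sum_subtractf)
    also have "(\<Sum>g\<in>J. a g \<bullet> x) = ?A \<bullet> x" by (simp add: inner_sum_left)
    finally have "(\<Sum>g\<in>J. b g - a g \<bullet> x) = 0" using x by simp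
    moreover have nn: "\<And>g. g \<in> J \<Longrightarrow> 0 \<le> b g - a g \<bullet> x"
    proof -
      fix g assume "g \<in> J"
      then have gH: "g \<in> H" using J by (rule subsetD[rotated])
      have xP: "x \<in> P" using x by (rule IntD1)
      have "a g \<bullet> x \<le> b g" using inPD[OF xP gH] .
      then show "0 \<le> b g - a g \<bullet> x" by simp
    qed
    have iff: "(\<Sum>g\<in>J. b g - a g \<bullet> x) = 0 \<longleftrightarrow> (\<forall>g\<in>J. b g - a g \<bullet> x = 0)"
      by (rule sum_nonneg_eq_0_iff[OF fJ nn])
    ultimately have "\<forall>g\<in>J. b g - a g \<bullet> x = 0" by (simp only: iff)
    then show "x \<in> fc J" using x unfolding fc_def by simp
  qed
  have cP: "convex P" using polytope_imp_convex[OF polyP] .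
  show ?thesis unfolding eq
    by (rule face_of_Int_supporting_hyperplane_le[OF cP le])
qed

definition nb where "nb v h = (SOME w. w extreme_point_of P \<and> w \<noteq> v \<and> w \<in> fc (Iv v - {h}))"

lemma nb_ex:
  assumes v: "v extreme_point_of P" and h: "h \<in> Iv v"
  shows "\<exists>w. w extreme_point_of P \<and> w \<noteq> v \<and> w \<in> fc (Iv v - {h})"
proof -
  let ?E = "fc (Iv v - {h})"
  have fE: "?E face_of P" using face_fc IvH by blast
  have pE: "polytope ?E" using face_of_polytope_polytope[OF polyP fE] .
  have vP: "v \<in> P" using v extreme_point_of_def by blast
  have "\<exists>c>0. \<forall>t. 0 < t \<and> t < c \<longrightarrow> v + t *\<^sub>R e v h \<in> P"
  proof (rule push[OF vP])
    fix g assume "g \<in> H" "a g \<bullet> v = b g"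
    then have g: "g \<in> Iv v" by (simp add: Iv_def)
    show "a g \<bullet> e v h \<le> 0" using dual[OF v h] g by (cases "g = h") auto
  qed
  then obtain c where c: "c > 0" "\<forall>t. 0 < t \<and> t < c \<longrightarrow> v + t *\<^sub>R e v h \<in> P" by blast
  define y where "y = v + (c/2) *\<^sub>R e v h"
  have yP: "y \<in> P" using c by (auto simp: y_def)
  have yE: "y \<in> ?E" using yP dual(2)[OF v h] vP
    by (auto simp: fc_def y_def inner_add_right Iv_def)
  have "e v h \<noteq> 0" using dual(1)[OF v h] by auto
  then have yv: "y \<noteq> v" using c by (auto simp: y_def)
  show ?thesis
  proof (rule ccontr)
    assume "\<not> ?thesis"
    then have sub: "{x. x extreme_point_of ?E} \<subseteq> {v}"
      using extreme_point_of_face[OF fE] by blast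
    have "?E = convex hull {x. x extreme_point_of ?E}"
      using Krein_Milman_Minkowski[OF polytope_imp_compact[OF pE] polytope_imp_convex[OF pE]] .
    also have "\<dots> \<subseteq> convex hull {v}" by (rule hull_mono[OF sub])
    finally show False using yE yv by auto
  qed
qed

lemma nb:
  assumes v: "v extreme_point_of P" and h: "h \<in> Iv v"
  shows "nb v h extreme_point_of P" "nb v h \<noteq> v" "nb v h \<in> fc (Iv v - {h})"
  using someI_ex[OF nb_ex[OF v h]] unfolding nb_def by auto

definition T where "T v h = b h - a h \<bullet> nb v h"

lemma nbT:
  assumes v: "v extreme_point_of P" and h: "h \<in> Iv v"
  shows "nb v h - v = T v h *\<^sub>R e v h" "T v h > 0"
proof -
  have "nb v h - v = (\<Sum>g\<in>Iv v. (b g - a g \<bullet> nb v h) *\<^sub>R e v g)" by (rule rep[OF v])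
  also have "\<dots> = (\<Sum>g\<in>Iv v. if g = h then T v h *\<^sub>R e v h else 0)"
    by (rule sum.cong) (use nb(3)[OF v h] in \<open>auto simp: fc_def T_def\<close>)
  also have "\<dots> = T v h *\<^sub>R e v h" using h finIv by simp
  finally show 1: "nb v h - v = T v h *\<^sub>R e v h" .
  have "nb v h \<in> P" using nb(3)[OF v h] by (simp add: fc_def)
  moreover have "h \<in> H" using h IvH by blast
  ultimately have "T v h \<ge> 0" using inPD by (simp add: T_def)
  moreover have "T v h \<noteq> 0" using 1 nb(2)[OF v h] by auto
  ultimately show "T v h > 0" by simp
qed

definition mu where "mu v h x = (b h - a h \<bullet> x) / T v h"

lemma rep2:
  assumes v: "v extreme_point_of P"
  shows "x - v = (\<Sum>h\<in>Iv v. mu v h x *\<^sub>R (nb v h - v))"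
proof -
  have "x - v = (\<Sum>h\<in>Iv v. (b h - a h \<bullet> x) *\<^sub>R e v h)" by (rule rep[OF v])
  also have "\<dots> = (\<Sum>h\<in>Iv v. mu v h x *\<^sub>R (nb v h - v))"
  proof (rule sum.cong[OF refl])
    fix h assume h: "h \<in> Iv v"
    have "mu v h x *\<^sub>R (nb v h - v) = (mu v h x * T v h) *\<^sub>R e v h"
      using nbT(1)[OF v h] by simp
    also have "mu v h x * T v h = b h - a h \<bullet> x" using nbT(2)[OF v h] by (simp add: mu_def)
    finally show "(b h - a h \<bullet> x) *\<^sub>R e v h = mu v h x *\<^sub>R (nb v h - v)" by simp
  qed
  finally show ?thesis .
qed

lemma aff_exp:
  assumes v: "v extreme_point_of P"
  shows "\<alpha> \<bullet> x + \<beta> = (\<alpha> \<bullet> v + \<beta>) + (\<Sum>h\<in>Iv v. mu v h x * ((\<alpha> \<bullet> nb v h + \<beta>) - (\<alpha> \<bullet> v + \<beta>)))"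
proof -
  have "\<alpha> \<bullet> (x - v) = (\<Sum>h\<in>Iv v. mu v h x * (\<alpha> \<bullet> (nb v h - v)))"
    by (subst rep2[OF v]) (simp add: inner_sum_right)
  then show ?thesis by (simp add: inner_diff_right algebra_simps)
qed


lemma nb_other:
  assumes v: "v extreme_point_of P" and h: "h \<in> Iv v" and g: "g \<in> Iv v" "g \<noteq> h"
  shows "a g \<bullet> nb v h = b g"
  using nb(3)[OF v h] g by (auto simp: fc_def)

lemma nb_self:
  assumes v: "v extreme_point_of P" and h: "h \<in> Iv v"
  shows "a h \<bullet> nb v h \<noteq> b h"
  using nbT(2)[OF v h] by (auto simp: T_def)

lemma nb_inj:
  assumes v: "v extreme_point_of P"
  shows "inj_on (nb v) (Iv v)"
proof (rule inj_onI)
  fix h g assume h: "h \<in> Iv v" and g: "g \<in> Iv v" and eq: "nb v h = nb v g"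
  show "h = g"
  proof (rule ccontr)
    assume "h \<noteq> g"
    then have "a h \<bullet> nb v g = b h" using nb_other[OF v g h] by auto
    then show False using nb_self[OF v h] eq by simp
  qed
qed

lemma vfc: "v extreme_point_of P \<Longrightarrow> J \<subseteq> Iv v \<Longrightarrow> v \<in> fc J"
  by (auto simp: fc_def Iv_def extreme_point_of_def)

lemma nbfc: "v extreme_point_of P \<Longrightarrow> h \<in> Iv v \<Longrightarrow> J \<subseteq> Iv v - {h} \<Longrightarrow> nb v h \<in> fc J"
  using nb(3) by (auto simp: fc_def)

lemma affdim_fc:
  assumes v: "v extreme_point_of P" and J: "J \<subseteq> Iv v"
  shows "aff_dim (fc J) = int (DIM('a) - card J)"
proof (rule antisym)
  let ?K = "Iv v - J"
  have cK: "card ?K = DIM('a) - card J"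
    using cardIv[OF v] J finIv by (simp add: card_Diff_subset finite_subset)
  let ?E = "e v ` ?K"
  have sub: "fc J \<subseteq> (+) v ` span ?E"
  proof
    fix x assume x: "x \<in> fc J"
    have "x - v = (\<Sum>h\<in>Iv v. (b h - a h \<bullet> x) *\<^sub>R e v h)" by (rule rep[OF v])
    also have "\<dots> = (\<Sum>h\<in>?K. (b h - a h \<bullet> x) *\<^sub>R e v h)"
      by (rule sum.mono_neutral_right) (use x finIv in \<open>auto simp: fc_def\<close>)
    also have "\<dots> \<in> span ?E"
      by (intro span_sum span_scale span_base imageI) auto
    finally have "x - v \<in> span ?E" .
    then show "x \<in> (+) v ` span ?E" by (intro image_eqI[of _ _ "x - v"]) auto
  qed
  have "aff_dim (fc J) \<le> aff_dim ((+) v ` span ?E)" by (rule aff_dim_subset[OF sub])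
  also have "\<dots> = int (dim ?E)" by (simp add: aff_dim_translation_eq aff_dim_subspace)
  also have "\<dots> \<le> int (card ?E)"
  proof -
    have "finite ?E" using finIv by simp
    then have "dim ?E \<le> card ?E" by (rule dim_le_card[OF span_superset])
    then show ?thesis by simp
  qed
  also have "\<dots> \<le> int (card ?K)" using card_image_le[OF finite_Diff[OF finIv]] by simp
  finally show "aff_dim (fc J) \<le> int (DIM('a) - card J)" using cK by simp
next
  let ?K = "Iv v - J"
  have cK: "card ?K = DIM('a) - card J"
    using cardIv[OF v] J finIv by (simp add: card_Diff_subset finite_subset)
  let ?N = "nb v ` ?K"
  have vN: "v \<notin> ?N" using nb(2)[OF v] by (metis (no_types, lifting) DiffD1 imageE)
  have fN: "finite ?N" using finIv by simp
  have "inj_on (nb v) ?K" using nb_inj[OF v] by (rule inj_on_subset) auto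
  then have cN: "card ?N = card ?K" by (rule card_image)
  let ?D = "(\<lambda>x. - v + x) ` ?N"
  have "\<not> dependent ?D"
  proof
    assume "dependent ?D"
    moreover have fD: "finite ?D" using fN by (rule finite_imageI)
    ultimately obtain u where u: "\<exists>y\<in>?D. u y \<noteq> 0" "(\<Sum>y\<in>?D. u y *\<^sub>R y) = 0"
      using dependent_finite[OF fD] by blast
    then obtain g where g: "g \<in> ?K" "u (- v + nb v g) \<noteq> 0" by auto
    have gI: "g \<in> Iv v" using g by auto
    have "a g \<bullet> (\<Sum>y\<in>?D. u y *\<^sub>R y) = (\<Sum>y\<in>?D. u y * (a g \<bullet> y))"
      by (simp add: inner_sum_right)
    also have "\<dots> = (\<Sum>y\<in>?D. if y = - v + nb v g then u y * (a g \<bullet> y) else 0)"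
    proof (rule sum.cong[OF refl])
      fix y assume "y \<in> ?D"
      then obtain h where h: "h \<in> ?K" "y = - v + nb v h" by auto
      show "u y * (a g \<bullet> y) = (if y = - v + nb v g then u y * (a g \<bullet> y) else 0)"
      proof (cases "h = g")
        case False
        then have "a g \<bullet> nb v h = b g" using nb_other[OF v _ gI] h by auto
        moreover have "a g \<bullet> v = b g" using gI by (simp add: Iv_def)
        ultimately have "a g \<bullet> y = 0" using h by (simp add: inner_add_right inner_diff_right)
        moreover have "nb v h \<noteq> nb v g"
          using False inj_onD[OF nb_inj[OF v], of h g] h(1) gI by blast
        then have "y \<noteq> - v + nb v g" using h(2) by simp
        ultimately show ?thesis by simp
      qed (use h in auto)
    qed
    also have "\<dots> = u (- v + nb v g) * (a g \<bullet> (- v + nb v g))"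
    proof -
      have mem: "- v + nb v g \<in> ?D" using g(1) by blast
      show ?thesis using sum.delta[OF fD, of "- v + nb v g" "\<lambda>y. u y * (a g \<bullet> y)"] mem by simp
    qed
    finally have "u (- v + nb v g) * (a g \<bullet> (- v + nb v g)) = 0" using u(2) by simp
    moreover have "a g \<bullet> (- v + nb v g) \<noteq> 0"
      using nb_self[OF v gI] gI by (simp add: inner_add_right inner_diff_right Iv_def)
    ultimately show False using g(2) by simp
  qed
  then have ind: "\<not> affine_dependent (insert v ?N)"
    using affine_dependent_iff_dependent[OF vN] by simp
  have "int (card (insert v ?N)) = aff_dim (insert v ?N) + 1"
    using aff_dim_affine_independent[OF ind] by simp
  then have "aff_dim (insert v ?N) = int (card ?K)" using vN fN cN by simp
  moreover have "insert v ?N \<subseteq> fc J"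
  proof -
    have "nb v h \<in> fc J" if "h \<in> ?K" for h
      using nbfc[OF v, of h J] that J by blast
    then show ?thesis using vfc[OF v J] by blast
  qed
  ultimately show "int (DIM('a) - card J) \<le> aff_dim (fc J)"
    using aff_dim_subset[of "insert v ?N" "fc J"] cK by simp
qed


definition L where
  "L v x = v \<bullet> v + (\<Sum>h\<in>Iv v. mu v h x * (nb v h \<bullet> nb v h - v \<bullet> v))"

lemma L_aff: "\<exists>\<alpha> \<beta>. \<forall>x. L v x = \<alpha> \<bullet> x + \<beta>"
proof -
  define c where "c h = (nb v h \<bullet> nb v h - v \<bullet> v) / T v h" for h
  have "L v x = (- (\<Sum>h\<in>Iv v. c h *\<^sub>R a h)) \<bullet> x + (v \<bullet> v + (\<Sum>h\<in>Iv v. c h * b h))" for x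
  proof -
    have "(\<Sum>h\<in>Iv v. mu v h x * (nb v h \<bullet> nb v h - v \<bullet> v)) = (\<Sum>h\<in>Iv v. c h * b h - c h * (a h \<bullet> x))"
      by (rule sum.cong) (simp_all add: mu_def c_def divide_inverse algebra_simps)
    also have "\<dots> = (\<Sum>h\<in>Iv v. c h * b h) - (\<Sum>h\<in>Iv v. c h *\<^sub>R a h) \<bullet> x"
      by (simp add: sum_subtractf inner_sum_left)
    finally show ?thesis by (simp add: L_def)
  qed
  then show ?thesis by blast
qed

lemma L_uniq:
  assumes v: "v extreme_point_of P" and f0: "\<alpha> \<bullet> v + \<beta> = v \<bullet> v"
    and f1: "\<And>h. h \<in> Iv v \<Longrightarrow> \<alpha> \<bullet> nb v h + \<beta> = nb v h \<bullet> nb v h"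
  shows "\<alpha> \<bullet> x + \<beta> = L v x"
proof -
  have "\<alpha> \<bullet> x + \<beta> = (\<alpha> \<bullet> v + \<beta>) + (\<Sum>h\<in>Iv v. mu v h x * ((\<alpha> \<bullet> nb v h + \<beta>) - (\<alpha> \<bullet> v + \<beta>)))"
    by (rule aff_exp[OF v])
  also have "\<dots> = L v x" unfolding L_def f0 by (rule arg_cong[where f="\<lambda>s. v \<bullet> v + s"], rule sum.cong) (simp_all add: f1)
  finally show ?thesis .
qed

lemma L_self: "v extreme_point_of P \<Longrightarrow> L v v = v \<bullet> v"
  by (simp add: L_def mu_def Iv_def)

lemma sphere_aff:
  assumes "dist c w = r"
  shows "w \<bullet> w = (2 *\<^sub>R c) \<bullet> w + (r\<^sup>2 - c \<bullet> c)"
proof -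
  have "r\<^sup>2 = (norm (c - w))\<^sup>2" using assms by (simp add: dist_norm)
  also have "\<dots> = (c - w) \<bullet> (c - w)" by (rule power2_norm_eq_inner)
  also have "\<dots> = c \<bullet> c - 2 * (c \<bullet> w) + w \<bullet> w" by (simp add: inner_diff_left inner_diff_right inner_commute)
  finally show ?thesis by simp
qed

lemma localk:
  assumes v: "v extreme_point_of P" and J: "J \<subseteq> Iv v" and cJ: "card J = DIM('a) - k"
    and kD: "k \<le> DIM('a)"
    and hyp: "\<forall>F. F face_of P \<and> aff_dim F = int k \<longrightarrow> inscribed F"
    and u: "u extreme_point_of P" "u \<in> fc J"
  shows "u \<bullet> u = L v u"
proof -
  have JH: "J \<subseteq> H" using J IvH by (rule order_trans)
  have fF: "fc J face_of P" by (rule face_fc[OF JH])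
  have "aff_dim (fc J) = int (DIM('a) - card J)" by (rule affdim_fc[OF v J])
  also have "DIM('a) - card J = k" using cJ kD by simp
  finally have "aff_dim (fc J) = int k" .
  then have "inscribed (fc J)" using hyp fF by blast
  then obtain c r where cr: "\<And>w. w extreme_point_of (fc J) \<Longrightarrow> dist c w = r"
    unfolding inscribed_def by blast
  define \<alpha> where "\<alpha> = 2 *\<^sub>R c"
  define \<beta> where "\<beta> = r\<^sup>2 - c \<bullet> c"
  have fq: "\<alpha> \<bullet> w + \<beta> = w \<bullet> w" if "w extreme_point_of P" "w \<in> fc J" for w
  proof -
    have "w extreme_point_of (fc J)" using extreme_point_of_face[OF fF] that by blast
    then show ?thesis using sphere_aff[OF cr] unfolding \<alpha>_def \<beta>_def by metis
  qed
  have f0: "\<alpha> \<bullet> v + \<beta> = v \<bullet> v" by (rule fq[OF v vfc[OF v J]])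
  have "\<alpha> \<bullet> u + \<beta> = (\<alpha> \<bullet> v + \<beta>) + (\<Sum>h\<in>Iv v. mu v h u * ((\<alpha> \<bullet> nb v h + \<beta>) - (\<alpha> \<bullet> v + \<beta>)))"
    by (rule aff_exp[OF v])
  also have "\<dots> = v \<bullet> v + (\<Sum>h\<in>Iv v. mu v h u * (nb v h \<bullet> nb v h - v \<bullet> v))"
    unfolding f0
  proof (rule arg_cong[where f="\<lambda>s. v \<bullet> v + s"], rule sum.cong[OF refl])
    fix h assume h: "h \<in> Iv v"
    show "mu v h u * (\<alpha> \<bullet> nb v h + \<beta> - v \<bullet> v) = mu v h u * (nb v h \<bullet> nb v h - v \<bullet> v)"
    proof (cases "h \<in> J")
      case True
      then have "a h \<bullet> u = b h" using u(2) by (simp add: fc_def)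
      then show ?thesis by (simp add: mu_def)
    next
      case False
      then have "J \<subseteq> Iv v - {h}" using J by blast
      then have "nb v h \<in> fc J" by (rule nbfc[OF v h])
      then have "\<alpha> \<bullet> nb v h + \<beta> = nb v h \<bullet> nb v h" by (rule fq[OF nb(1)[OF v h]])
      then show ?thesis by simp
    qed
  qed
  also have "\<dots> = L v u" by (simp add: L_def)
  finally show ?thesis using fq[OF u] by simp
qed

lemma propagate:
  assumes v: "v extreme_point_of P" and h: "h \<in> Iv v"
    and k2: "2 \<le> k" and kD: "k \<le> DIM('a)"
    and hyp: "\<forall>F. F face_of P \<and> aff_dim F = int k \<longrightarrow> inscribed F"
  shows "L (nb v h) x = L v x"
proof -
  define w where "w = nb v h"
  have w: "w extreme_point_of P" using nb(1)[OF v h] by (simp add: w_def)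
  have wfc: "w \<in> fc (Iv v - {h})" using nb(3)[OF v h] by (simp add: w_def)
  have sub: "Iv v - {h} \<subseteq> Iv w"
  proof
    fix g assume g: "g \<in> Iv v - {h}"
    then have "a g \<bullet> w = b g" using wfc by (simp add: fc_def)
    moreover have "g \<in> H" using g IvH by blast
    ultimately show "g \<in> Iv w" by (simp add: Iv_def)
  qed
  have cvh: "card (Iv v - {h}) = DIM('a) - 1" using cardIv[OF v] h finIv by simp
  have qw: "w \<bullet> w = L v w"
  proof -
    have "DIM('a) - k \<le> card (Iv v - {h})" using cvh k2 by simp
    then obtain J where J: "J \<subseteq> Iv v - {h}" "card J = DIM('a) - k"
      by (rule obtain_subset_with_card_n)
    have "w \<in> fc J" using wfc J(1) by (auto simp: fc_def)
    then show ?thesis using localk[OF v _ J(2) kD hyp w] J(1) by blast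
  qed
  have qn: "nb w g \<bullet> nb w g = L v (nb w g)" if g: "g \<in> Iv w" for g
  proof -
    have "card (Iv v - {h} - {g}) \<ge> DIM('a) - 2"
      using cvh finIv[of v] by (cases "g \<in> Iv v - {h}") (simp_all add: card_Diff_singleton_if numeral_2_eq_2)
    then have "DIM('a) - k \<le> card (Iv v - {h} - {g})" using k2 by simp
    then obtain J where J: "J \<subseteq> Iv v - {h} - {g}" "card J = DIM('a) - k"
      by (rule obtain_subset_with_card_n)
    have "J \<subseteq> Iv w - {g}" using J(1) sub by blast
    then have "nb w g \<in> fc J" by (rule nbfc[OF w g])
    then show ?thesis using localk[OF v _ J(2) kD hyp nb(1)[OF w g]] J(1) by blast
  qed
  obtain \<alpha> \<beta> where ab': "\<And>x. L v x = \<alpha> \<bullet> x + \<beta>" using L_aff by blast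
  have "\<alpha> \<bullet> x + \<beta> = L w x"
    by (rule L_uniq[OF w]) (use qw qn ab' in auto)
  then show ?thesis using ab' by (simp add: w_def)
qed


lemma main:
  assumes Pne: "P \<noteq> {}" and k2: "2 \<le> k" and kD: "k \<le> DIM('a)"
    and hyp: "\<forall>F. F face_of P \<and> aff_dim F = int k \<longrightarrow> inscribed F"
  shows "inscribed P"
proof -
  let ?X = "{x. x extreme_point_of P}"
  have finX: "finite ?X"
    by (rule finite_polyhedron_extreme_points[OF polytope_imp_polyhedron[OF polyP]])
  have "P = convex hull ?X"
    using Krein_Milman_Minkowski[OF polytope_imp_compact[OF polyP] polytope_imp_convex[OF polyP]] .
  then obtain v0 where v0: "v0 extreme_point_of P" using Pne by fastforce
  define c where "c = (\<Sum>h\<in>Iv v0. a h)"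
  have cdiff: "c \<bullet> v0 - c \<bullet> x = (\<Sum>h\<in>Iv v0. b h - a h \<bullet> x)" for x
    by (simp add: c_def inner_sum_left sum_subtractf Iv_def)
  have cle: "c \<bullet> x \<le> c \<bullet> v0" if x: "x \<in> P" for x
  proof -
    have "0 \<le> (\<Sum>h\<in>Iv v0. b h - a h \<bullet> x)"
    proof (rule sum_nonneg)
      fix h assume "h \<in> Iv v0"
      then have "h \<in> H" using IvH by blast
      then have "a h \<bullet> x \<le> b h" by (rule inPD[OF x])
      then show "0 \<le> b h - a h \<bullet> x" by simp
    qed
    then show ?thesis using cdiff[of x] by simp
  qed
  have ceq: "x = v0" if x: "x \<in> P" and eq: "c \<bullet> x = c \<bullet> v0" for x
  proof -
    have nn: "\<And>h. h \<in> Iv v0 \<Longrightarrow> 0 \<le> b h - a h \<bullet> x"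
    proof -
      fix h assume "h \<in> Iv v0"
      then have "h \<in> H" using IvH by blast
      then have "a h \<bullet> x \<le> b h" by (rule inPD[OF x])
      then show "0 \<le> b h - a h \<bullet> x" by simp
    qed
    have "(\<Sum>h\<in>Iv v0. b h - a h \<bullet> x) = 0" using cdiff[of x] eq by simp
    then have z: "\<forall>h\<in>Iv v0. b h - a h \<bullet> x = 0"
      using sum_nonneg_eq_0_iff[OF finIv nn] by simp
    have "x - v0 = (\<Sum>h\<in>Iv v0. (b h - a h \<bullet> x) *\<^sub>R e v0 h)" by (rule rep[OF v0])
    also have "\<dots> = 0" using z by simp
    finally show ?thesis by simp
  qed
  have step: "\<exists>h\<in>Iv v. c \<bullet> v < c \<bullet> nb v h" if v: "v extreme_point_of P" and vv0: "v \<noteq> v0" for v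
  proof (rule ccontr)
    assume "\<not> ?thesis"
    then have le: "\<And>h. h \<in> Iv v \<Longrightarrow> c \<bullet> (nb v h - v) \<le> 0" by (auto simp: inner_diff_right)
    have v0P: "v0 \<in> P" using v0 extreme_point_of_def by blast
    have vP: "v \<in> P" using v extreme_point_of_def by blast
    have "c \<bullet> (v0 - v) = (\<Sum>h\<in>Iv v. mu v h v0 * (c \<bullet> (nb v h - v)))"
      by (subst rep2[OF v]) (simp add: inner_sum_right)
    also have "\<dots> \<le> 0"
    proof (rule sum_nonpos)
      fix h assume h: "h \<in> Iv v"
      have "h \<in> H" using h IvH by blast
      then have "a h \<bullet> v0 \<le> b h" by (rule inPD[OF v0P])
      then have "0 \<le> mu v h v0" using nbT(2)[OF v h] by (simp add: mu_def)
      then show "mu v h v0 * (c \<bullet> (nb v h - v)) \<le> 0" using le[OF h] by (simp add: mult_nonneg_nonpos)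
    qed
    finally have "c \<bullet> v0 \<le> c \<bullet> v" by (simp add: inner_diff_right)
    then have "c \<bullet> v = c \<bullet> v0" using cle[OF vP] by simp
    then show False using ceq[OF vP] vv0 by simp
  qed
  have claim: "\<forall>v. v extreme_point_of P \<longrightarrow> card {u\<in>?X. c \<bullet> v < c \<bullet> u} = n \<longrightarrow> (\<forall>x. L v x = L v0 x)" for n
  proof (induction n rule: less_induct)
    case (less n)
    show ?case
    proof (intro allI impI)
      fix v x assume v: "v extreme_point_of P" and n: "card {u\<in>?X. c \<bullet> v < c \<bullet> u} = n"
      show "L v x = L v0 x"
      proof (cases "v = v0")
        case True then show ?thesis by simp
      next
        case False
        then obtain h where h: "h \<in> Iv v" and lt: "c \<bullet> v < c \<bullet> nb v h" using step[OF v] by blast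
        define w where "w = nb v h"
        have w: "w extreme_point_of P" using nb(1)[OF v h] by (simp add: w_def)
        have ss: "{u\<in>?X. c \<bullet> w < c \<bullet> u} \<subset> {u\<in>?X. c \<bullet> v < c \<bullet> u}"
          using lt w by (auto simp: w_def)
        have "card {u\<in>?X. c \<bullet> w < c \<bullet> u} < n"
          using psubset_card_mono[OF _ ss] finX n by simp
        then have "L w x = L v0 x" using less.IH w by blast
        moreover have "L w x = L v x" unfolding w_def by (rule propagate[OF v h k2 kD hyp])
        ultimately show ?thesis by simp
      qed
    qed
  qed
  obtain \<alpha> \<beta> where ab': "\<And>x. L v0 x = \<alpha> \<bullet> x + \<beta>" using L_aff by blast
  have vq: "v \<bullet> v = \<alpha> \<bullet> v + \<beta>" if v: "v extreme_point_of P" for v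
  proof -
    have "v \<bullet> v = L v v" using L_self[OF v] by simp
    also have "\<dots> = L v0 v" using claim v by blast
    finally show ?thesis using ab' by simp
  qed
  define c0 where "c0 = (1/2) *\<^sub>R \<alpha>"
  have "dist c0 v = sqrt (c0 \<bullet> c0 + \<beta>)" if v: "v extreme_point_of P" for v
  proof -
    have "(c0 - v) \<bullet> (c0 - v) = c0 \<bullet> c0 - 2 * (c0 \<bullet> v) + v \<bullet> v"
      by (simp add: inner_diff_left inner_diff_right inner_commute)
    also have "2 * (c0 \<bullet> v) = \<alpha> \<bullet> v" by (simp add: c0_def)
    finally have "(c0 - v) \<bullet> (c0 - v) = c0 \<bullet> c0 + \<beta>" using vq[OF v] by simp
    then show ?thesis by (simp add: dist_norm norm_eq_sqrt_inner)
  qed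
  then show ?thesis unfolding inscribed_def by blast
qed


end

lemma interior_strict:
  fixes p :: "'a::euclidean_space"
  assumes p: "p \<in> interior S" and S: "S \<subseteq> {x. c \<bullet> x \<le> d}" and c: "c \<noteq> 0"
  shows "c \<bullet> p < d"
proof -
  obtain r where r: "r > 0" "ball p r \<subseteq> S" using p mem_interior by blast
  define y where "y = p + (r / 2 / norm c) *\<^sub>R c"
  have "dist p y = r / 2" using c r by (simp add: y_def dist_norm)
  then have "y \<in> S" using r by auto
  then have "c \<bullet> y \<le> d" using S by blast
  moreover have "c \<bullet> y = c \<bullet> p + (r / 2 / norm c) * (c \<bullet> c)" by (simp add: y_def inner_add_right)
  moreover have "0 < (r / 2 / norm c) * (c \<bullet> c)" using c r by simp
  ultimately show ?thesis by linarith
qed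

lemma hyp_inj:
  fixes P :: "'a::euclidean_space set"
  assumes finF: "finite F" and PF: "P = \<Inter>F"
    and ab: "\<And>h. h \<in> F \<Longrightarrow> a h \<noteq> 0 \<and> h = {x. a h \<bullet> x \<le> b h}"
    and mini: "\<And>F'. F' \<subset> F \<Longrightarrow> P \<subset> \<Inter>F'"
    and p: "p \<in> interior P" and h: "h \<in> F" and h': "h' \<in> F" and hh: "h \<noteq> h'"
    and eq: "P \<inter> {x. a h \<bullet> x = b h} = P \<inter> {x. a h' \<bullet> x = b h'}"
  shows False
proof -
  have memh: "x \<in> g \<longleftrightarrow> a g \<bullet> x \<le> b g" if g: "g \<in> F" for g x
  proof -
    have geq: "g = {x. a g \<bullet> x \<le> b g}" using ab[OF g] by (rule conjunct2)
    show ?thesis by (subst geq) simp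
  qed
  have strict: "a g \<bullet> p < b g" if g: "g \<in> F" for g
  proof (rule interior_strict[OF p])
    have "P \<subseteq> g" using PF g by blast
    then show "P \<subseteq> {x. a g \<bullet> x \<le> b g}" using memh[OF g] by blast
    show "a g \<noteq> 0" using ab[OF g] by (rule conjunct1)
  qed
  have "F - {h'} \<subset> F" using h' by blast
  then have "P \<subset> \<Inter>(F - {h'})" by (rule mini)
  then obtain z where z: "z \<in> \<Inter>(F - {h'})" "z \<notin> P" by blast
  have zg: "a g \<bullet> z \<le> b g" if "g \<in> F" "g \<noteq> h'" for g
  proof -
    have "z \<in> g" using z(1) that by blast
    then show ?thesis using memh[OF that(1)] by blast
  qed
  have "z \<notin> h'"
  proof
    assume "z \<in> h'"
    then have "z \<in> \<Inter>F" using z(1) by blast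
    then show False using z(2) PF by blast
  qed
  then have zh': "a h' \<bullet> z > b h'" using memh[OF h', of z] by linarith
  have ph': "a h' \<bullet> p < b h'" by (rule strict[OF h'])
  define t where "t = (b h' - a h' \<bullet> p) / (a h' \<bullet> z - a h' \<bullet> p)"
  have t0: "0 < t" and t1: "t < 1" using zh' ph' by (auto simp: t_def divide_simps)
  define y where "y = p + t *\<^sub>R (z - p)"
  have yform: "a g \<bullet> y = (1 - t) * (a g \<bullet> p) + t * (a g \<bullet> z)" for g
    by (simp add: y_def inner_add_right inner_diff_right algebra_simps)
  have yh': "a h' \<bullet> y = b h'"
  proof -
    have "a h' \<bullet> y = a h' \<bullet> p + t * (a h' \<bullet> z - a h' \<bullet> p)" by (simp add: yform algebra_simps)
    also have "t * (a h' \<bullet> z - a h' \<bullet> p) = b h' - a h' \<bullet> p" using zh' ph' by (simp add: t_def)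
    finally show ?thesis by simp
  qed
  have ylt: "a g \<bullet> y < b g" if g: "g \<in> F" "g \<noteq> h'" for g
  proof -
    have "(1 - t) * (a g \<bullet> p) < (1 - t) * b g" using strict[OF g(1)] t1 by simp
    moreover have "t * (a g \<bullet> z) \<le> t * b g" using zg[OF g] t0 by (simp add: mult_left_mono)
    ultimately show ?thesis using yform[of g] by (simp add: algebra_simps)
  qed
  have "y \<in> P"
  proof -
    have "y \<in> g" if g: "g \<in> F" for g
    proof (cases "g = h'")
      case True then show ?thesis using memh[OF h', of y] yh' by simp
    next
      case False then show ?thesis using memh[OF g, of y] ylt[OF g False] by simp
    qed
    then show ?thesis using PF by blast
  qed
  then have "y \<in> P \<inter> {x. a h \<bullet> x = b h}" using eq yh' by blast
  then show False using ylt[OF h hh] by simp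
qed


theorem corollary4p11:
  fixes P :: "'a::euclidean_space set" and k :: nat
  assumes "polytope P" and "aff_dim P = int DIM('a)"
    and "simple_polytope P"
    and "2 \<le> k" and "k \<le> DIM('a)"
  shows "inscribed P \<longleftrightarrow>
         (\<forall>F. F face_of P \<and> aff_dim F = int k \<longrightarrow> inscribed F)"
proof
  assume "inscribed P"
  then obtain c r where cr: "\<And>v. v extreme_point_of P \<Longrightarrow> dist c v = r"
    unfolding inscribed_def by blast
  show "\<forall>F. F face_of P \<and> aff_dim F = int k \<longrightarrow> inscribed F"
  proof (intro allI impI)
    fix F assume F: "F face_of P \<and> aff_dim F = int k"
    have "dist c v = r" if "v extreme_point_of F" for v
      using cr extreme_point_of_face[of F P v] F that by blast
    then show "inscribed F" unfolding inscribed_def by blast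
  qed
next
  assume hyp: "\<forall>F. F face_of P \<and> aff_dim F = int k \<longrightarrow> inscribed F"
  have polyP: "polytope P" by fact
  have hull: "affine hull P = UNIV" using assms(2) aff_dim_eq_full by blast
  have "polyhedron P" using polytope_imp_polyhedron[OF polyP] .
  then obtain F where finF: "finite F" and seq: "P = affine hull P \<inter> \<Inter>F"
    and faces: "\<And>h. h \<in> F \<Longrightarrow> \<exists>a b. a \<noteq> 0 \<and> h = {x. a \<bullet> x \<le> b}"
    and mini: "\<And>F'. F' \<subset> F \<Longrightarrow> P \<subset> (affine hull P) \<inter> \<Inter>F'"
    by (simp add: polyhedron_Int_affine_minimal) meson
  then obtain a b where ab: "\<And>h. h \<in> F \<Longrightarrow> a h \<noteq> 0 \<and> h = {x. a h \<bullet> x \<le> b h}"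
    by metis
  have PF: "P = \<Inter>F" using seq hull by simp
  have mini': "\<And>F'. F' \<subset> F \<Longrightarrow> P \<subset> \<Inter>F'" using mini hull by simp
  have Pne: "P \<noteq> {}" using assms(2) by auto
  have "rel_interior P \<noteq> {}"
    using rel_interior_eq_empty polytope_imp_convex[OF polyP] Pne by blast
  then obtain p where p: "p \<in> interior P" using rel_interior_interior[OF hull] by blast
  let ?f = "\<lambda>h. P \<inter> {x. a h \<bullet> x = b h}"
  have inj: "inj_on ?f F"
  proof (rule inj_onI, rule ccontr)
    fix h h' assume "h \<in> F" "h' \<in> F" "?f h = ?f h'" "h \<noteq> h'"
    then show False using hyp_inj[OF finF PF ab mini' p] by blast
  qed
  have cardI: "card {h\<in>F. a h \<bullet> v = b h} = DIM('a)" if v: "v extreme_point_of P" for v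
  proof -
    have vP: "v \<in> P" using v extreme_point_of_def by blast
    have "{C. C facet_of P \<and> v \<in> C} = ?f ` {h\<in>F. a h \<bullet> v = b h}"
    proof -
      have fe: "\<And>C. C facet_of P \<longleftrightarrow> (\<exists>h. h \<in> F \<and> C = ?f h)"
        by (rule facet_of_polyhedron_explicit[OF finF seq ab mini])
      show ?thesis using vP by (auto simp: fe)
    qed
    moreover have "inj_on ?f {h\<in>F. a h \<bullet> v = b h}" using inj by (rule inj_on_subset) auto
    ultimately have "card {C. C facet_of P \<and> v \<in> C} = card {h\<in>F. a h \<bullet> v = b h}"
      by (simp add: card_image)
    moreover have "int (card {C. C facet_of P \<and> v \<in> C}) = aff_dim P"
      using assms(3) v unfolding simple_polytope_def by blast
    ultimately show ?thesis using assms(2) by simp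
  qed
  interpret sp P F a b
  proof unfold_locales
    show "finite F" by (rule finF)
    show "P = \<Inter>F" by (rule PF)
    show "\<And>h. h \<in> F \<Longrightarrow> a h \<noteq> 0 \<and> h = {x. a h \<bullet> x \<le> b h}" by (rule ab)
    show "polytope P" by (rule polyP)
    show "\<And>v. v extreme_point_of P \<Longrightarrow> card {h\<in>F. a h \<bullet> v = b h} = DIM('a)" by (rule cardI)
  qed
  show "inscribed P" by (rule main[OF Pne assms(4) assms(5) hyp])
qed

end
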